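(* Let $f:(\mathbb R^2,q)\to(\mathbb R^3,p)$ be a smooth germ with a corank 1 singularity at $q$ whose curvature parabola $\Delta_p$ is not a line (so that $\kappa_a(p)$ is defined). Then $\kappa_a(p)=0$ if and only if the axial vector $v_a$ is a binormal direction.
   Context: $T_pM=\operatorname{im}df_q$, $N_pM$ its orthogonal complement with a fixed orientation. First fundamental form $I(X,Y)=\langle df_qX,df_qY\rangle$; second fundamental form $II$: the symmetric bilinear map $T_q\mathbb R^2\times T_q\mathbb R^2\to N_pM$ with $II(\partial_u,\partial_u)=f_{uu}(q)^\perp$, $II(\partial_u,\partial_v)=f_{uv}(q)^\perp$, $II(\partial_v,\partial_v)=f_{vv}(q)^\perp$ ($\perp$ = orthogonal projection to $N_pM$); $II_\nu=\langle II,\nu\rangle$. Curvature parabola $\Delta_p=\{II(X,X):I(X,X)=1\}$; in coordinates with $f_v(q)=0$, $|f_u(q)|=1$ it is parametrized by $\eta(y)=II(\partial_u+y\partial_v,\partial_u+y\partial_v)$, $y\in\mathbb R$, and is a non-degenerate parabola, half-line, line or point. A nonzero $X\in T_q\mathbb R^2$ is asymptotic if there is a nonzero $\nu\in N_pM$ with $II_\nu(X,Y)=0$ for all $Y$; such $\nu$ is a binormal direction. Axial vector $v_a$: for a non-degenerate parabola, the unit vector along the axis of symmetry pointing to its interior; for a half-line, $\eta'(y)/|\eta'(y)|$ for any $y>0$ with $\eta'(y)\neq 0$; for a point $c\ne0$, the unit vector with $\{v_a,c/|c|\}$ a positively oriented orthonormal frame; for the origin, any unit vector. Axial curvature $\kappa_a(p)=\min_{y}\langle\eta(y),v_a\rangle$.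 *)

theory Defs
  imports "HOL-Analysis.Analysis"
begin

text \<open>Germs f : (R^2,q) -> (R^3,p); coordinates (u,v) on R^2 are the standard ones,
  index 1 = u, index 2 = v.\<close>

fun pd :: "2 list \<Rightarrow> (real^2 \<Rightarrow> real^3) \<Rightarrow> real^2 \<Rightarrow> real^3" where
  "pd [] g = g"
| "pd (i # is) g = (\<lambda>x. vector_derivative (\<lambda>t. pd is g (x + t *\<^sub>R axis i 1)) (at 0))"

definition smooth_on :: "(real^2) set \<Rightarrow> (real^2 \<Rightarrow> real^3) \<Rightarrow> bool" where
  "smooth_on U g \<longleftrightarrow> open U \<and>
     (\<forall>is. continuous_on U (pd is g) \<and>
        (\<forall>x\<in>U. \<forall>i. ((\<lambda>t. pd is g (x + t *\<^sub>R axis i 1))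
                     has_vector_derivative pd (i # is) g x) (at 0)))"

definition smooth_germ :: "(real^2 \<Rightarrow> real^3) \<Rightarrow> real^2 \<Rightarrow> bool" where
  "smooth_germ f q \<longleftrightarrow> (\<exists>U. q \<in> U \<and> smooth_on U f)"

definition fu :: "(real^2 \<Rightarrow> real^3) \<Rightarrow> real^2 \<Rightarrow> real^3" where "fu f q = pd [1] f q"
definition fv :: "(real^2 \<Rightarrow> real^3) \<Rightarrow> real^2 \<Rightarrow> real^3" where "fv f q = pd [2] f q"
definition fuu :: "(real^2 \<Rightarrow> real^3) \<Rightarrow> real^2 \<Rightarrow> real^3" where "fuu f q = pd [1,1] f q"
definition fuv :: "(real^2 \<Rightarrow> real^3) \<Rightarrow> real^2 \<Rightarrow> real^3" where "fuv f q = pd [2,1] f q"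
definition fvv :: "(real^2 \<Rightarrow> real^3) \<Rightarrow> real^2 \<Rightarrow> real^3" where "fvv f q = pd [2,2] f q"

definition df :: "(real^2 \<Rightarrow> real^3) \<Rightarrow> real^2 \<Rightarrow> real^2 \<Rightarrow> real^3" where
  "df f q X = (X $ 1) *\<^sub>R fu f q + (X $ 2) *\<^sub>R fv f q"

definition corank1 :: "(real^2 \<Rightarrow> real^3) \<Rightarrow> real^2 \<Rightarrow> bool" where
  "corank1 f q \<longleftrightarrow> dim (range (df f q)) = 1"

definition TpM :: "(real^2 \<Rightarrow> real^3) \<Rightarrow> real^2 \<Rightarrow> (real^3) set" where
  "TpM f q = range (df f q)"

definition NpM :: "(real^2 \<Rightarrow> real^3) \<Rightarrow> real^2 \<Rightarrow> (real^3) set" where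
  "NpM f q = {w. \<forall>t\<in>TpM f q. t \<bullet> w = 0}"

definition nproj :: "(real^2 \<Rightarrow> real^3) \<Rightarrow> real^2 \<Rightarrow> real^3 \<Rightarrow> real^3" where
  "nproj f q w = (THE n. n \<in> NpM f q \<and> w - n \<in> TpM f q)"

definition FF1 :: "(real^2 \<Rightarrow> real^3) \<Rightarrow> real^2 \<Rightarrow> real^2 \<Rightarrow> real^2 \<Rightarrow> real" where
  "FF1 f q X Y = df f q X \<bullet> df f q Y"

definition FF2 :: "(real^2 \<Rightarrow> real^3) \<Rightarrow> real^2 \<Rightarrow> real^2 \<Rightarrow> real^2 \<Rightarrow> real^3" where
  "FF2 f q X Y = nproj f q ((X$1 * Y$1) *\<^sub>R fuu f q + (X$1 * Y$2 + X$2 * Y$1) *\<^sub>R fuv f q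
                              + (X$2 * Y$2) *\<^sub>R fvv f q)"

definition curv_parabola :: "(real^2 \<Rightarrow> real^3) \<Rightarrow> real^2 \<Rightarrow> (real^3) set" where
  "curv_parabola f q = {FF2 f q X X | X. FF1 f q X X = 1}"

definition is_nondeg_parabola :: "(real^3) set \<Rightarrow> bool" where
  "is_nondeg_parabola S \<longleftrightarrow> (\<exists>A B C. \<not> dependent {B, C} \<and> B \<noteq> C \<and>
       S = {A + y *\<^sub>R B + y\<^sup>2 *\<^sub>R C | y. True})"

definition is_halfline_from :: "(real^3) set \<Rightarrow> real^3 \<Rightarrow> real^3 \<Rightarrow> bool" where
  "is_halfline_from S x0 w \<longleftrightarrow> w \<noteq> 0 \<and> S = {x0 + t *\<^sub>R w | t. t \<ge> 0}"

definition is_line :: "(real^3) set \<Rightarrow> bool" where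
  "is_line S \<longleftrightarrow> (\<exists>x0 w. w \<noteq> 0 \<and> S = {x0 + t *\<^sub>R w | t. True})"

text \<open>Orientation of N_pM: fixed by a nonzero tangent vector tau; a pair (a,b) in N_pM is
  positively oriented iff det(tau,a,b) > 0.\<close>
definition pos_oriented :: "real^3 \<Rightarrow> real^3 \<Rightarrow> real^3 \<Rightarrow> bool" where
  "pos_oriented tau a b \<longleftrightarrow> tau \<bullet> cross3 a b > 0"

text \<open>Axial vector (a relation, since for the origin any unit vector qualifies).
  Non-degenerate parabola: unit vector w along the axis of symmetry (the rotation by pi about the
  line through the vertex x0 in direction w maps the parabola onto itself; within the plane N_pM
  this is the reflection in the axis), pointing to the interior (x0 + w lies in the convex region
  bounded by the parabola, i.e. its convex hull).
  Half-line: the unit direction of the half-line (= eta'(y)/|eta'(y)| for large y).\<close>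
definition is_axial_vector :: "(real^2 \<Rightarrow> real^3) \<Rightarrow> real^2 \<Rightarrow> real^3 \<Rightarrow> real^3 \<Rightarrow> bool" where
  "is_axial_vector f q tau va \<longleftrightarrow>
     (let D = curv_parabola f q in
       (is_nondeg_parabola D \<and> norm va = 1 \<and> va \<in> NpM f q \<and>
          (\<exists>x0\<in>D. (\<lambda>x. x0 + (2 * ((x - x0) \<bullet> va)) *\<^sub>R va - (x - x0)) ` D = D
                 \<and> x0 + va \<in> convex hull D))
     \<or> (\<exists>x0 w. is_halfline_from D x0 w \<and> va = w /\<^sub>R norm w)
     \<or> (\<exists>c. D = {c} \<and> c \<noteq> 0 \<and> norm va = 1 \<and> va \<in> NpM f q \<and> va \<bullet> c = 0 \<and>
              pos_oriented tau va (c /\<^sub>R norm c))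
     \<or> (D = {0} \<and> norm va = 1 \<and> va \<in> NpM f q))"

text \<open>Axial curvature kappa_a = min_y <eta(y), v_a>; since eta parametrizes the curvature
  parabola, this is the minimum of <x, v_a> over the curvature parabola.\<close>
definition axial_curvature :: "(real^2 \<Rightarrow> real^3) \<Rightarrow> real^2 \<Rightarrow> real^3 \<Rightarrow> real" where
  "axial_curvature f q va = Inf ((\<lambda>x. x \<bullet> va) ` curv_parabola f q)"

definition is_binormal :: "(real^2 \<Rightarrow> real^3) \<Rightarrow> real^2 \<Rightarrow> real^3 \<Rightarrow> bool" where
  "is_binormal f q nu \<longleftrightarrow> nu \<in> NpM f q \<and> nu \<noteq> 0 \<and>
     (\<exists>X. X \<noteq> 0 \<and> (\<forall>Y. FF2 f q X Y \<bullet> nu = 0))"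

end

theory Submission
  imports Defs
begin


lemma cross_cross_expand: "cross3 v (cross3 t u) = (v \<bullet> u) *\<^sub>R t - (v \<bullet> t) *\<^sub>R u"
  by (simp add: cross3_simps forall_3)

lemma basis3_zero:
  fixes v t u :: "real^3"
  assumes "v \<bullet> t = 0" "v \<bullet> u = 0" "v \<bullet> cross3 t u = 0" "t \<bullet> t = 1" "u \<bullet> u = 1" "t \<bullet> u = 0"
  shows "v = 0"
proof -
  have c: "cross3 v (cross3 t u) = 0" using assms by (simp add: cross_cross_expand)
  have n1: "(norm (cross3 t u))\<^sup>2 = 1"
    using norm_cross_dot[of t u] assms by (simp add: norm_eq_sqrt_inner)
  have "(norm v * norm (cross3 t u))\<^sup>2 = 0"
    using norm_cross_dot[of v "cross3 t u"] c assms by simp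
  then have "(norm v)\<^sup>2 = 0" using n1 by (simp add: power_mult_distrib)
  then show ?thesis by simp
qed

lemma point_param:
  fixes A B C c :: "real^3"
  assumes "range (\<lambda>s::real. A + s *\<^sub>R B + s\<^sup>2 *\<^sub>R C) = {c}"
  shows "B = 0 \<and> C = 0 \<and> A = c"
proof -
  have h: "\<And>s::real. A + s *\<^sub>R B + s\<^sup>2 *\<^sub>R C = c" using assms by blast
  have 0: "A = c" using h[of 0] by simp
  have 1: "A + B + C = c" using h[of 1] by simp
  have 2: "A - B + C = c" using h[of "-1"] by simp
  have "2 *\<^sub>R B = (A + B + C) - (A - B + C)" by (simp add: scaleR_2)
  also have "\<dots> = 0" unfolding 1 2 by simp
  finally have B0: "B = 0" by simp
  have "C = (A + B + C) - A - B" by simp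
  also have "\<dots> = 0" unfolding 1 using 0 B0 by simp
  finally show ?thesis using 0 B0 by simp
qed

lemma dep_two:
  fixes B1 C1 v :: "real^3"
  assumes "B1 = b *\<^sub>R v" "C1 = c *\<^sub>R v"
  shows "dependent {B1, C1} \<or> B1 = C1"
proof (cases "C1 = 0")
  case True then show ?thesis by (simp add: dependent_zero)
next
  case False
  then have "c \<noteq> 0" using assms by auto
  then have "B1 = (b / c) *\<^sub>R C1" using assms by simp
  then have "B1 \<in> span {C1}" by (simp add: span_base span_mul)
  moreover have "B1 \<noteq> C1 \<Longrightarrow> dependent {B1, C1}"
  proof -
    assume ne: "B1 \<noteq> C1"
    have "{B1, C1} - {B1} = {C1}" using ne by auto
    then show ?thesis using calculation unfolding dependent_def by (intro bexI[of _ B1]) auto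
  qed
  ultimately show ?thesis by blast
qed



lemma quartic_zero:
  fixes c1 c2 c3 c4 :: real
  assumes "\<And>x. c1 * x + c2 * x^2 + c3 * x^3 + c4 * x^4 = 0"
  shows "c1 = 0 \<and> c2 = 0 \<and> c3 = 0 \<and> c4 = 0"
proof -
  have "c1 + c2 + c3 + c4 = 0" using assms[of 1] by simp
  moreover have "-c1 + c2 - c3 + c4 = 0" using assms[of "-1"] by simp
  moreover have "2*c1 + 4*c2 + 8*c3 + 16*c4 = 0" using assms[of 2] by simp
  moreover have "-2*c1 + 4*c2 - 8*c3 + 16*c4 = 0" using assms[of "-2"] by simp
  ultimately show ?thesis by linarith
qed

lemma parab_axis:
  fixes A B C u e x0 :: "real^3"
  assumes D: "D = range (\<lambda>s::real. A + s *\<^sub>R B + s\<^sup>2 *\<^sub>R C)"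
    and uu: "u \<bullet> u = 1" and ue: "u \<bullet> e = 0"
    and d: "(B \<bullet> u)*(C \<bullet> e) - (C \<bullet> u)*(B \<bullet> e) \<noteq> 0"
    and x0: "x0 \<in> D"
    and sym: "(\<lambda>x. x0 + (2 * ((x - x0) \<bullet> u)) *\<^sub>R u - (x - x0)) ` D = D"
    and ch: "x0 + u \<in> convex hull D"
  shows "C \<bullet> u > 0"
proof -
  obtain s0 where s0: "x0 = A + s0 *\<^sub>R B + s0\<^sup>2 *\<^sub>R C" using x0 D by auto
  define a1 where "a1 = (B + (2* s0) *\<^sub>R C) \<bullet> u"
  define a2 where "a2 = C \<bullet> u"
  define b1 where "b1 = (B + (2* s0) *\<^sub>R C) \<bullet> e"
  define b2 where "b2 = C \<bullet> e"
  define dd where "dd = a1*b2 - a2*b1"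
  have dd: "dd \<noteq> 0" using d unfolding dd_def a1_def a2_def b1_def b2_def
    by (simp add: inner_add_left algebra_simps)
  have pu: "(A + s *\<^sub>R B + s\<^sup>2 *\<^sub>R C - x0) \<bullet> u = a1*(s-s0) + a2*(s-s0)^2" for s
    unfolding s0 a1_def a2_def by (simp add: inner_add_left inner_diff_left algebra_simps power2_eq_square)
  have pe: "(A + s *\<^sub>R B + s\<^sup>2 *\<^sub>R C - x0) \<bullet> e = b1*(s-s0) + b2*(s-s0)^2" for s
    unfolding s0 b1_def b2_def by (simp add: inner_add_left inner_diff_left algebra_simps power2_eq_square)
  have key: "(b1* s + b2* s^2) * (dd*a1 + 2*a2*b2*(a1* s + a2* s^2)) = 0" for s
  proof -
    define x where "x = A + (s+s0) *\<^sub>R B + (s+s0)\<^sup>2 *\<^sub>R C"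
    have "x \<in> D" unfolding x_def D by auto
    then have "x0 + (2 * ((x - x0) \<bullet> u)) *\<^sub>R u - (x - x0) \<in> D" using sym by blast
    then obtain s' where s': "A + s' *\<^sub>R B + s'\<^sup>2 *\<^sub>R C = x0 + (2 * ((x - x0) \<bullet> u)) *\<^sub>R u - (x - x0)"
      using D by auto
    define t where "t = s' - s0"
    have "(A + s' *\<^sub>R B + s'\<^sup>2 *\<^sub>R C - x0) \<bullet> u = (x - x0) \<bullet> u"
      unfolding s' using uu by (simp add: inner_diff_left inner_add_left)
    then have tu: "a1*t + a2*t^2 = a1* s + a2* s^2"
      using pu[of s'] pu[of "s+s0"] unfolding t_def x_def by simp
    have "(A + s' *\<^sub>R B + s'\<^sup>2 *\<^sub>R C - x0) \<bullet> e = - ((x - x0) \<bullet> e)"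
      unfolding s' using ue by (simp add: inner_diff_left inner_add_left)
    then have te: "b1*t + b2*t^2 = - (b1* s + b2* s^2)"
      using pe[of s'] pe[of "s+s0"] unfolding t_def x_def by simp
    define a where "a = a1* s + a2* s^2"
    define b where "b = b1* s + b2* s^2"
    have F1: "dd*(a1*b - b1*a) = (b2*a - a2*b)^2"
      unfolding a_def b_def dd_def by (simp add: algebra_simps power2_eq_square)
    have F2: "dd*(a1*(-b) - b1*a) = (b2*a - a2*(-b))^2"
    proof -
      have "dd*(a1*(b1*t + b2*t^2) - b1*(a1*t + a2*t^2)) = (b2*(a1*t + a2*t^2) - a2*(b1*t + b2*t^2))^2"
        unfolding dd_def by (simp add: algebra_simps power2_eq_square)
      then show ?thesis using tu te unfolding a_def b_def by simp
    qed
    have "b * (dd*a1 + 2*a2*b2*a) = 0"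
    proof -
      have "(b2*a - a2*(-b))^2 - (b2*a - a2*b)^2 = 4*a2*b2*a*b" by (simp add: algebra_simps power2_eq_square)
      then have "dd*(a1*(-b) - b1*a) - dd*(a1*b - b1*a) = 4*a2*b2*a*b" using F1 F2 by simp
      then have "-2*(b * (dd*a1 + 2*a2*b2*a)) = 0" by (simp add: algebra_simps)
      then show ?thesis by simp
    qed
    then show ?thesis unfolding a_def b_def .
  qed
  have "(b1*dd*a1)* s + (b2*dd*a1 + 2*a2*b2*a1*b1)* s^2 + (2*b1*a2^2*b2 + 2*b2^2*a2*a1)* s^3 + (2*a2^2*b2^2)* s^4 = 0" for s
    using key[of s] by (simp add: algebra_simps power2_eq_square power3_eq_cube power4_eq_xxxx)
  note co = quartic_zero[OF this]
  have "a2*b2 = 0" using co by simp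
  moreover have "a1 = 0"
  proof (rule ccontr)
    assume "a1 \<noteq> 0"
    then have "b1 = 0" "b2 = 0" using co dd by auto
    then show False using dd unfolding dd_def by simp
  qed
  ultimately have a2: "a2 \<noteq> 0" using dd unfolding dd_def by auto
  have "\<not> a2 < 0"
  proof
    assume neg: "a2 < 0"
    define H where "H = {x. u \<bullet> x \<le> u \<bullet> x0}"
    have cH: "convex H" unfolding H_def by (rule convex_halfspace_le)
    have DH: "D \<subseteq> H"
    proof
      fix x assume "x \<in> D"
      then obtain s where xs: "x = A + s *\<^sub>R B + s\<^sup>2 *\<^sub>R C" using D by auto
      have "(x - x0) \<bullet> u = a2*(s-s0)^2" using pu[of s] \<open>a1 = 0\<close> xs by simp
      also have "\<dots> \<le> 0" using neg by (simp add: mult_nonpos_nonneg)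
      finally have "x \<bullet> u \<le> x0 \<bullet> u" by (simp add: inner_diff_left)
      then show "x \<in> H" unfolding H_def by (simp add: inner_commute)
    qed
    have "convex hull D \<subseteq> H" by (rule hull_minimal[where S=convex, OF DH cH])
    then have "x0 + u \<in> H" using ch by blast
    then show False using uu unfolding H_def by (simp add: inner_add_right)
  qed
  then show ?thesis using a2 unfolding a2_def by linarith
qed



lemma quad_nonneg:
  fixes t0 b g :: real
  assumes "\<And>s. t0 + b* s + g* s^2 \<ge> 0"
  shows "g \<ge> 0 \<and> (g = 0 \<longrightarrow> b = 0)"
proof -
  have "g \<ge> 0"
  proof (rule ccontr)
    assume "\<not> g \<ge> 0" then have g: "g < 0" by simp
    define s where "s = 1 + (\<bar>b\<bar> + \<bar>t0\<bar>) / (-g)"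
    have "0 \<le> (\<bar>b\<bar> + \<bar>t0\<bar>) / (-g)" by (rule divide_nonneg_pos) (use g in auto)
    then have s1: "s \<ge> 1" unfolding s_def by simp
    have "g* s = g - (\<bar>b\<bar> + \<bar>t0\<bar>)" unfolding s_def using g by (simp add: field_simps)
    then have gs: "g * s = g - (\<bar>b\<bar> + \<bar>t0\<bar>)" .
    have "g * s^2 = s*(g * s)" by (simp add: power2_eq_square algebra_simps)
    also have "\<dots> = s*g - s*(\<bar>b\<bar> + \<bar>t0\<bar>)" unfolding gs by (simp add: right_diff_distrib)
    finally have "g * s^2 = s*g - s*(\<bar>b\<bar> + \<bar>t0\<bar>)" .
    moreover have "s*\<bar>t0\<bar> \<ge> \<bar>t0\<bar>" using s1 by (simp add: mult_le_cancel_right1)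
    moreover have "b* s \<le> \<bar>b\<bar>* s" using s1 by (simp add: mult_right_mono)
    moreover have "t0 \<le> \<bar>t0\<bar>" by simp
    ultimately have "t0 + b* s + g* s^2 \<le> s*g" by (simp add: algebra_simps)
    moreover have "s*g < 0" using s1 g by (simp add: mult_pos_neg)
    ultimately show False using assms[of s] by linarith
  qed
  moreover have "g = 0 \<longrightarrow> b = 0"
  proof
    assume g: "g = 0"
    show "b = 0"
    proof (rule ccontr)
      assume "b \<noteq> 0"
      then have "t0 + b*(-(t0+1)/b) + g*(-(t0+1)/b)^2 = -1" using g by (simp add: field_simps)
      then show False using assms[of "-(t0+1)/b"] by linarith
    qed
  qed
  ultimately show ?thesis by blast
qed



lemma halfline_param:
  fixes A B C x0 w :: "real^3"
  assumes D: "D = range (\<lambda>s::real. A + s *\<^sub>R B + s\<^sup>2 *\<^sub>R C)"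
    and H: "D = {x0 + t *\<^sub>R w | t. t \<ge> 0}" and w: "w \<noteq> 0"
  shows "C \<bullet> w > 0"
proof -
  have mem: "\<exists>t\<ge>0. A + s *\<^sub>R B + s\<^sup>2 *\<^sub>R C = x0 + t *\<^sub>R w" for s
  proof -
    have "A + s *\<^sub>R B + s\<^sup>2 *\<^sub>R C \<in> D" using D by auto
    then show ?thesis using H by auto
  qed
  obtain t0 where t0: "A = x0 + t0 *\<^sub>R w" using mem[of 0] by auto
  obtain t1 where t1: "A + B + C = x0 + t1 *\<^sub>R w" using mem[of 1] by auto
  obtain t2 where t2: "A - B + C = x0 + t2 *\<^sub>R w" using mem[of "-1"] by auto
  define bb where "bb = (t1 - t2)/2"
  define gg where "gg = (t1 + t2)/2 - t0"
  have B: "B = bb *\<^sub>R w"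
  proof -
    have "(A + B + C) - (A - B + C) = (t1 - t2) *\<^sub>R w" using t1 t2 by (simp add: algebra_simps)
    then have "2 *\<^sub>R B = (t1 - t2) *\<^sub>R w" by (simp add: algebra_simps scaleR_2)
    then have "(1/2::real) *\<^sub>R (2 *\<^sub>R B) = (1/2::real) *\<^sub>R ((t1 - t2) *\<^sub>R w)" by simp
    then show ?thesis unfolding bb_def by simp
  qed
  have C: "C = gg *\<^sub>R w"
  proof -
    have "C = (A + B + C) - A - B" by simp
    also have "\<dots> = (x0 + t1 *\<^sub>R w) - (x0 + t0 *\<^sub>R w) - bb *\<^sub>R w" by (subst t1) (simp add: t0 B)
    also have "\<dots> = (t1 - t0 - bb) *\<^sub>R w" by (simp add: scaleR_diff_left)
    also have "t1 - t0 - bb = gg" unfolding gg_def bb_def by (simp add: field_simps)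
    finally show ?thesis .
  qed
  have nn: "t0 + bb * s + gg * s^2 \<ge> 0" for s
  proof -
    obtain t where t: "t \<ge> 0" "A + s *\<^sub>R B + s\<^sup>2 *\<^sub>R C = x0 + t *\<^sub>R w" using mem[of s] by auto
    have "A + s *\<^sub>R B + s\<^sup>2 *\<^sub>R C = x0 + (t0 + bb * s + gg * s^2) *\<^sub>R w"
      unfolding t0 B C by (simp add: scaleR_add_left add.assoc mult.commute)
    then have "(t0 + bb * s + gg * s^2) *\<^sub>R w = t *\<^sub>R w" using t(2) by (metis add_left_cancel)
    then have "t0 + bb * s + gg * s^2 = t" using w by auto
    then show ?thesis using t by simp
  qed
  note q = quad_nonneg[OF nn]
  have "gg \<noteq> 0"
  proof
    assume "gg = 0"
    then have "bb = 0" using q by simp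
    then have B0: "B = 0" using B by simp
    have C0: "C = 0" using C \<open>gg = 0\<close> by simp
    have DA: "D = {A}" unfolding D B0 C0 by simp
    have m0: "x0 + 0 *\<^sub>R w \<in> D" unfolding H by (rule CollectI, rule exI[of _ "0::real"]) simp
    have m1: "x0 + 1 *\<^sub>R w \<in> D" unfolding H by (rule CollectI, rule exI[of _ "1::real"]) simp
    have "x0 = A" "x0 + w = A" using m0 m1 unfolding DA by simp_all
    then show False using w by simp
  qed
  then have "gg > 0" using q by simp
  then show ?thesis using C w by simp
qed



lemma df_vec: "df f q (vector [x, y]) = x *\<^sub>R fu f q + y *\<^sub>R fv f q"
  by (simp add: df_def)

lemma tangent_dir:
  assumes "corank1 f q"
  shows "\<exists>t \<alpha> \<beta>. t \<bullet> t = 1 \<and> fu f q = \<alpha> *\<^sub>R t \<and> fv f q = \<beta> *\<^sub>R t \<and> \<alpha>\<^sup>2 + \<beta>\<^sup>2 \<noteq> 0"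
proof -
  define F where "F = fu f q"
  define G where "G = fv f q"
  have dim: "dim (range (df f q)) = 1" using assms unfolding corank1_def .
  have FG: "F \<in> range (df f q)" "G \<in> range (df f q)"
    unfolding F_def G_def using df_vec[of f q 1 0] df_vec[of f q 0 1] by (metis rangeI scaleR_one scaleR_zero_left add.right_neutral add.left_neutral)+
  have ne: "F \<noteq> 0 \<or> G \<noteq> 0"
  proof (rule ccontr)
    assume "\<not> (F \<noteq> 0 \<or> G \<noteq> 0)"
    then have "range (df f q) \<subseteq> {0}" unfolding df_def F_def G_def by auto
    then have "dim (range (df f q)) = 0" by (simp add: dim_eq_0)
    then show False using dim by simp
  qed
  define g where "g = (if F \<noteq> 0 then F else G)"
  have g0: "g \<noteq> 0" using ne unfolding g_def by auto
  have two: "\<And>x y. x \<noteq> 0 \<Longrightarrow> x \<in> range (df f q) \<Longrightarrow> y \<in> range (df f q) \<Longrightarrow> y \<in> span {x}"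
  proof (rule ccontr)
    fix x y assume x: "x \<noteq> 0" "x \<in> range (df f q)" and y: "y \<in> range (df f q)" and ny: "y \<notin> span {x}"
    have "independent {x}" using x by simp
    then have ind: "independent (insert y {x})" using ny by (rule independent_insertI[rotated])
    have "y \<noteq> x" using ny span_base[of x "{x}"] by auto
    then have "card {y, x} = 2" by simp
    moreover have "card {y, x} \<le> dim (range (df f q))"
      by (rule independent_card_le_dim) (use x y ind in auto)
    ultimately show False using dim by simp
  qed
  have "F \<in> span {g}" "G \<in> span {g}"
    using two[OF g0] FG g_def span_base by (auto simp: span_zero)
  then obtain a b where ab: "F = a *\<^sub>R g" "G = b *\<^sub>R g" unfolding span_singleton by auto
  define t where "t = (1 / norm g) *\<^sub>R g"
  have n: "norm g > 0" using g0 by simp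
  have tt: "t \<bullet> t = 1" unfolding t_def using n by (simp add: power2_norm_eq_inner[symmetric] power2_eq_square)
  have gt: "g = norm g *\<^sub>R t" unfolding t_def using n by simp
  have "F = (a * norm g) *\<^sub>R t" "G = (b * norm g) *\<^sub>R t" using ab gt by (metis scaleR_scaleR)+
  moreover have "(a * norm g)\<^sup>2 + (b * norm g)\<^sup>2 \<noteq> 0"
  proof
    assume "(a * norm g)\<^sup>2 + (b * norm g)\<^sup>2 = 0"
    then have "a = 0" "b = 0" using n by (simp_all add: add_nonneg_eq_0_iff)
    then show False using ab ne by auto
  qed
  ultimately show ?thesis using tt unfolding F_def G_def by blast
qed

lemma three_pts:
  fixes A1 B1 C1 P v :: "real^3"
  assumes "A1 = P + k0 *\<^sub>R v" "A1 + B1 + C1 = P + k1 *\<^sub>R v" "A1 - B1 + C1 = P + k2 *\<^sub>R v"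
  shows "B1 = ((k1 - k2)/2) *\<^sub>R v \<and> C1 = ((k1 + k2)/2 - k0) *\<^sub>R v"
proof -
  have "2 *\<^sub>R B1 = (A1 + B1 + C1) - (A1 - B1 + C1)" by (simp add: scaleR_2)
  also have "\<dots> = (k1 - k2) *\<^sub>R v" unfolding assms(2,3) by (simp add: scaleR_diff_left)
  finally have b: "2 *\<^sub>R B1 = (k1 - k2) *\<^sub>R v" .
  have "B1 = (1/2::real) *\<^sub>R (2 *\<^sub>R B1)" by simp
  also have "\<dots> = ((k1 - k2)/2) *\<^sub>R v" unfolding b by simp
  finally have B: "B1 = ((k1 - k2)/2) *\<^sub>R v" .
  have "C1 = (A1 + B1 + C1) - A1 - B1" by simp
  also have "\<dots> = (P + k1 *\<^sub>R v) - (P + k0 *\<^sub>R v) - ((k1 - k2)/2) *\<^sub>R v" by (subst assms(2)) (simp only: assms(1) B)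
  also have "\<dots> = (k1 - k0 - (k1 - k2)/2) *\<^sub>R v" by (simp add: scaleR_diff_left)
  also have "k1 - k0 - (k1 - k2)/2 = (k1 + k2)/2 - k0" by (simp add: field_simps)
  finally show ?thesis using B by simp
qed

lemma degen:
  fixes a b c :: real
  shows "(\<exists>X::real^2. X \<noteq> 0 \<and> (\<forall>Y::real^2. X$1*Y$1*a + (X$1*Y$2 + X$2*Y$1)*b + X$2*Y$2*c = 0))
         \<longleftrightarrow> a*c = b^2"
proof
  assume "\<exists>X::real^2. X \<noteq> 0 \<and> (\<forall>Y::real^2. X$1*Y$1*a + (X$1*Y$2 + X$2*Y$1)*b + X$2*Y$2*c = 0)"
  then obtain X :: "real^2" where X: "X \<noteq> 0" "\<And>Y::real^2. X$1*Y$1*a + (X$1*Y$2 + X$2*Y$1)*b + X$2*Y$2*c = 0" by blast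
  have e1: "X$1*a + X$2*b = 0" using X(2)[of "vector [1,0]"] by simp
  have e2: "X$1*b + X$2*c = 0" using X(2)[of "vector [0,1]"] by simp
  have "X$1 \<noteq> 0 \<or> X$2 \<noteq> 0"
  proof (rule ccontr)
    assume "\<not> (X$1 \<noteq> 0 \<or> X$2 \<noteq> 0)"
    then have "X = 0" by (simp add: vec_eq_iff forall_2)
    then show False using X(1) by simp
  qed
  moreover have "X$1*(a*c - b^2) = c*(X$1*a + X$2*b) - b*(X$1*b + X$2*c)" by (simp add: algebra_simps power2_eq_square)
  moreover have "X$2*(a*c - b^2) = a*(X$1*b + X$2*c) - b*(X$1*a + X$2*b)" by (simp add: algebra_simps power2_eq_square)
  ultimately show "a*c = b^2" using e1 e2 by auto
next
  assume h: "a*c = b^2"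
  show "\<exists>X::real^2. X \<noteq> 0 \<and> (\<forall>Y::real^2. X$1*Y$1*a + (X$1*Y$2 + X$2*Y$1)*b + X$2*Y$2*c = 0)"
  proof (cases "a = 0 \<and> b = 0")
    case True
    have "(vector [1,0] :: real^2) $ 1 \<noteq> 0" by simp
    then have "(vector [1,0] :: real^2) \<noteq> 0" by (metis zero_index)
    then show ?thesis using True by (intro exI[of _ "vector [1,0]"]) simp
  next
    case False
    have "vector [b, -a] \<noteq> (0::real^2)" using False by (auto simp: vec_eq_iff forall_2)
    moreover have "\<forall>Y::real^2. b*Y$1*a + (b*Y$2 + (-a)*Y$1)*b + (-a)*Y$2*c = 0"
      using h by (simp add: algebra_simps power2_eq_square)
    ultimately show ?thesis by (intro exI[of _ "vector [b, -a]"]) simp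
  qed
qed




lemma nondeg_d:
  fixes A B C t u :: "real^3"
  assumes D: "D = range (\<lambda>s::real. A + s *\<^sub>R B + s\<^sup>2 *\<^sub>R C)" and nd: "is_nondeg_parabola D"
    and Bt: "B \<bullet> t = 0" and Ct: "C \<bullet> t = 0" and tt: "t \<bullet> t = 1" and uu: "u \<bullet> u = 1" and ut: "u \<bullet> t = 0"
  shows "(B \<bullet> u)*(C \<bullet> cross3 t u) - (C \<bullet> u)*(B \<bullet> cross3 t u) \<noteq> 0"
proof
  define e where "e = cross3 t u"
  assume "(B \<bullet> u)*(C \<bullet> cross3 t u) - (C \<bullet> u)*(B \<bullet> cross3 t u) = 0"
  then have d0: "(B \<bullet> u)*(C \<bullet> e) - (C \<bullet> u)*(B \<bullet> e) = 0" unfolding e_def .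
  obtain l m where lm: "l \<noteq> 0 \<or> m \<noteq> 0" "l*(B \<bullet> u) + m*(C \<bullet> u) = 0" "l*(B \<bullet> e) + m*(C \<bullet> e) = 0"
  proof (cases "C \<bullet> u \<noteq> 0 \<or> B \<bullet> u \<noteq> 0")
    case True
    show ?thesis by (rule that[of "C \<bullet> u" "-(B \<bullet> u)"]) (use True d0 in \<open>auto simp: algebra_simps\<close>)
  next
    case False
    show ?thesis
    proof (cases "C \<bullet> e \<noteq> 0 \<or> B \<bullet> e \<noteq> 0")
      case True
      show ?thesis by (rule that[of "C \<bullet> e" "-(B \<bullet> e)"]) (use True False d0 in \<open>auto simp: algebra_simps\<close>)
    next
      case False2: False
      show ?thesis by (rule that[of 1 0]) (use False False2 in auto)
    qed
  qed
  have v: "l *\<^sub>R B + m *\<^sub>R C = 0"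
    by (rule basis3_zero[of _ t u]) (use lm Bt Ct tt uu ut inner_commute[of t u] in \<open>auto simp: inner_add_left e_def\<close>)
  obtain v0 where line: "\<And>s::real. \<exists>k. A + s *\<^sub>R B + s\<^sup>2 *\<^sub>R C = A + k *\<^sub>R v0"
  proof (cases "m = 0")
    case True
    then have "l \<noteq> 0" using lm by simp
    then have "B = 0" using v True by simp
    then show ?thesis by (intro that[of C]) auto
  next
    case False
    have "m *\<^sub>R C = - (l *\<^sub>R B)" using v by (simp add: eq_neg_iff_add_eq_0 add.commute)
    then have "(1/m) *\<^sub>R (m *\<^sub>R C) = (1/m) *\<^sub>R (- (l *\<^sub>R B))" by simp
    then have C: "C = (-(l/m)) *\<^sub>R B" using False by simp
    show ?thesis
    proof (rule that[of B])
      fix s :: real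
      have "A + s *\<^sub>R B + s\<^sup>2 *\<^sub>R C = A + (s - s\<^sup>2 * (l/m)) *\<^sub>R B"
        unfolding C by (simp add: scaleR_diff_left algebra_simps)
      then show "\<exists>k. A + s *\<^sub>R B + s\<^sup>2 *\<^sub>R C = A + k *\<^sub>R B" by blast
    qed
  qed
  obtain A1 B1 C1 where nd1: "independent {B1, C1}" "B1 \<noteq> C1" "D = {A1 + y *\<^sub>R B1 + y\<^sup>2 *\<^sub>R C1 |y. True}"
    using nd unfolding is_nondeg_parabola_def by blast
  have inD: "\<exists>k. A1 + y *\<^sub>R B1 + y\<^sup>2 *\<^sub>R C1 = A + k *\<^sub>R v0" for y
  proof -
    have "A1 + y *\<^sub>R B1 + y\<^sup>2 *\<^sub>R C1 \<in> D" using nd1(3) by blast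
    then obtain s where "A1 + y *\<^sub>R B1 + y\<^sup>2 *\<^sub>R C1 = A + s *\<^sub>R B + s\<^sup>2 *\<^sub>R C" using D by auto
    then show ?thesis using line[of s] by metis
  qed
  obtain k0 where k0: "A1 = A + k0 *\<^sub>R v0" using inD[of 0] by auto
  obtain k1 where k1: "A1 + B1 + C1 = A + k1 *\<^sub>R v0" using inD[of 1] by auto
  obtain k2 where k2: "A1 - B1 + C1 = A + k2 *\<^sub>R v0" using inD[of "-1"] by auto
  have "B1 = ((k1 - k2)/2) *\<^sub>R v0 \<and> C1 = ((k1 + k2)/2 - k0) *\<^sub>R v0" by (rule three_pts[OF k0 k1 k2])
  then have "dependent {B1, C1} \<or> B1 = C1" using dep_two by blast
  then show False using nd1 by blast
qed



theorem mainTheorem9: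
  fixes f :: "real^2 \<Rightarrow> real^3" and q :: "real^2" and tau va :: "real^3"
  assumes "smooth_germ f q"
    and "corank1 f q"
    and "\<not> is_line (curv_parabola f q)"
    and "tau \<in> TpM f q" and "tau \<noteq> 0"
    and "is_axial_vector f q tau va"
  shows "axial_curvature f q va = 0 \<longleftrightarrow> is_binormal f q va"
proof -
  obtain t \<alpha> \<beta> where t: "t \<bullet> t = 1" "fu f q = \<alpha> *\<^sub>R t" "fv f q = \<beta> *\<^sub>R t" "\<alpha>\<^sup>2 + \<beta>\<^sup>2 \<noteq> 0"
    using tangent_dir[OF assms(2)] by blast
  define n where "n = \<alpha>\<^sup>2 + \<beta>\<^sup>2"
  have n0: "n \<noteq> 0" using t(4) unfolding n_def .
  define u1 where "u1 = \<alpha> / n"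
  define u2 where "u2 = \<beta> / n"
  have "u1 * \<alpha> + u2 * \<beta> = (\<alpha> * \<alpha> + \<beta> * \<beta>) / n" unfolding u1_def u2_def by (simp add: add_divide_distrib)
  moreover have "\<alpha> * \<alpha> + \<beta> * \<beta> = n" unfolding n_def by (simp add: power2_eq_square)
  ultimately have u12: "u1 * \<alpha> + u2 * \<beta> = 1" using n0 by simp
  have dfL: "df f q X = (\<alpha> * X$1 + \<beta> * X$2) *\<^sub>R t" for X
    unfolding df_def t by (simp add: scaleR_add_left mult.commute)
  have TpM: "TpM f q = range (\<lambda>k. k *\<^sub>R t)"
  proof
    show "TpM f q \<subseteq> range (\<lambda>k. k *\<^sub>R t)" unfolding TpM_def dfL by auto
    show "range (\<lambda>k. k *\<^sub>R t) \<subseteq> TpM f q"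
    proof
      fix x assume "x \<in> range (\<lambda>k. k *\<^sub>R t)"
      then obtain k where k: "x = k *\<^sub>R t" by auto
      have "df f q (vector [k * u1, k * u2]) = (k * (u1 * \<alpha> + u2 * \<beta>)) *\<^sub>R t"
        unfolding dfL by (simp add: algebra_simps)
      then have "df f q (vector [k * u1, k * u2]) = x" using u12 k by simp
      then show "x \<in> TpM f q" unfolding TpM_def by (metis rangeI)
    qed
  qed
  have NpM: "NpM f q = {w. w \<bullet> t = 0}"
    unfolding NpM_def TpM by (auto simp: inner_commute)
  have nproj: "nproj f q w = w - (w \<bullet> t) *\<^sub>R t" for w
    unfolding nproj_def
  proof (rule the_equality)
    show "w - (w \<bullet> t) *\<^sub>R t \<in> NpM f q \<and> w - (w - (w \<bullet> t) *\<^sub>R t) \<in> TpM f q"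
    proof -
      have "(w \<bullet> t) *\<^sub>R t \<in> range (\<lambda>k. k *\<^sub>R t)" by blast
      then show ?thesis unfolding NpM TpM using t(1) by (simp add: inner_diff_left)
    qed
    fix m assume "m \<in> NpM f q \<and> w - m \<in> TpM f q"
    then obtain k where m: "m \<bullet> t = 0" "w - m = k *\<^sub>R t" unfolding NpM TpM by auto
    have w: "w = k *\<^sub>R t + m" using m(2) by (simp add: diff_eq_eq)
    have "w \<bullet> t = k" unfolding w using m(1) t(1) by (simp add: inner_add_left)
    then show "m = w - (w \<bullet> t) *\<^sub>R t" unfolding w by simp
  qed
  define a where "a = nproj f q (fuu f q)"
  define b where "b = nproj f q (fuv f q)"
  define c where "c = nproj f q (fvv f q)"
  have abcN: "a \<bullet> t = 0" "b \<bullet> t = 0" "c \<bullet> t = 0"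
    unfolding a_def b_def c_def nproj using t(1) by (simp_all add: inner_diff_left)
  have FF2: "FF2 f q X Y = (X$1*Y$1) *\<^sub>R a + (X$1*Y$2 + X$2*Y$1) *\<^sub>R b + (X$2*Y$2) *\<^sub>R c" for X Y
    unfolding FF2_def nproj a_def b_def c_def
    by (simp add: vec_eq_iff inner_add_left algebra_simps)
  have FF1: "FF1 f q X X = (\<alpha> * X$1 + \<beta> * X$2)\<^sup>2" for X
    unfolding FF1_def dfL using t(1) by (simp add: power2_eq_square)
  define x1 where "x1 s = u1 - s * \<beta>" for s
  define x2 where "x2 s = u2 + s * \<alpha>" for s
  define A where "A = (u1^2) *\<^sub>R a + (2*u1*u2) *\<^sub>R b + (u2^2) *\<^sub>R c"
  define B where "B = (-2*u1*\<beta>) *\<^sub>R a + (2*(u1*\<alpha> - u2*\<beta>)) *\<^sub>R b + (2*u2*\<alpha>) *\<^sub>R c"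
  define C where "C = (\<beta>^2) *\<^sub>R a + (-2*\<alpha>*\<beta>) *\<^sub>R b + (\<alpha>^2) *\<^sub>R c"
  define P where "P s = A + s *\<^sub>R B + s\<^sup>2 *\<^sub>R C" for s
  have Pq: "P s = (x1 s * x1 s) *\<^sub>R a + (2 * (x1 s * x2 s)) *\<^sub>R b + (x2 s * x2 s) *\<^sub>R c" for s
    unfolding P_def A_def B_def C_def x1_def x2_def
    by (simp add: vec_eq_iff algebra_simps power2_eq_square)
  have FF2d: "FF2 f q X X = (X$1 * X$1) *\<^sub>R a + (2 * (X$1 * X$2)) *\<^sub>R b + (X$2 * X$2) *\<^sub>R c" for X
    unfolding FF2 by (simp add: algebra_simps)
  have Drange: "curv_parabola f q = range P"
  proof
    show "curv_parabola f q \<subseteq> range P"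
    proof
      fix x assume "x \<in> curv_parabola f q"
      then obtain X where X: "x = FF2 f q X X" "FF1 f q X X = 1" unfolding curv_parabola_def by auto
      define \<sigma> where "\<sigma> = \<alpha> * X$1 + \<beta> * X$2"
      have ss: "\<sigma> * \<sigma> = 1" using X(2) unfolding FF1 \<sigma>_def by (simp add: power2_eq_square)
      define s where "s = \<sigma> * (- \<beta> * X$1 + \<alpha> * X$2) / n"
      have e1: "\<sigma> * x1 s = X$1"
      proof -
        have "\<sigma> * x1 s = \<sigma> * u1 - (\<sigma> * \<sigma>) * \<beta> * (- \<beta> * X$1 + \<alpha> * X$2) / n"
          unfolding x1_def s_def by (simp add: algebra_simps)
        also have "\<dots> = (\<sigma> * \<alpha> - \<beta> * (- \<beta> * X$1 + \<alpha> * X$2)) / n"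
          unfolding ss u1_def by (simp add: diff_divide_distrib)
        also have "\<dots> = (n * X$1) / n" unfolding \<sigma>_def n_def by (simp add: algebra_simps power2_eq_square)
        also have "\<dots> = X$1" using n0 by simp
        finally show ?thesis .
      qed
      have e2: "\<sigma> * x2 s = X$2"
      proof -
        have "\<sigma> * x2 s = \<sigma> * u2 + (\<sigma> * \<sigma>) * \<alpha> * (- \<beta> * X$1 + \<alpha> * X$2) / n"
          unfolding x2_def s_def by (simp add: algebra_simps)
        also have "\<dots> = (\<sigma> * \<beta> + \<alpha> * (- \<beta> * X$1 + \<alpha> * X$2)) / n"
          unfolding ss u2_def by (simp add: add_divide_distrib)
        also have "\<dots> = (n * X$2) / n" unfolding \<sigma>_def n_def by (simp add: algebra_simps power2_eq_square)
        also have "\<dots> = X$2" using n0 by simp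
        finally show ?thesis .
      qed
      have "X$1 * X$1 = x1 s * x1 s" "X$1 * X$2 = x1 s * x2 s" "X$2 * X$2 = x2 s * x2 s"
        unfolding e1[symmetric] e2[symmetric] using ss by (simp_all add: algebra_simps)
      then have "x = P s" unfolding X(1) FF2d Pq by simp
      then show "x \<in> range P" by simp
    qed
    show "range P \<subseteq> curv_parabola f q"
    proof
      fix x assume "x \<in> range P"
      then obtain s where s: "x = P s" by auto
      define X :: "real^2" where "X = vector [x1 s, x2 s]"
      have "\<alpha> * X$1 + \<beta> * X$2 = u1 * \<alpha> + u2 * \<beta>" unfolding X_def x1_def x2_def by (simp add: algebra_simps)
      then have "FF1 f q X X = 1" unfolding FF1 using u12 by simp
      moreover have "x = FF2 f q X X" unfolding s FF2d Pq X_def by simp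
      ultimately show "x \<in> curv_parabola f q" unfolding curv_parabola_def by blast
    qed
  qed
  have ABCt: "A \<bullet> t = 0" "B \<bullet> t = 0" "C \<bullet> t = 0"
    unfolding A_def B_def C_def using abcN by (simp_all add: inner_add_left inner_diff_left)
  have Pt: "P s \<bullet> t = 0" for s unfolding P_def using ABCt by (simp add: inner_add_left)
  have PN: "P s \<in> NpM f q" for s using Pt unfolding NpM by simp
  have ax: "is_axial_vector f q tau va" by fact
  have vaN: "va \<bullet> t = 0" and va0: "va \<noteq> 0"
    and cases: "C \<bullet> va > 0 \<or> (C \<bullet> va = 0 \<and> B \<bullet> va = 0 \<and> A \<bullet> va = 0)"
  proof -
    have "(va \<bullet> t = 0 \<and> va \<noteq> 0) \<and> (C \<bullet> va > 0 \<or> (C \<bullet> va = 0 \<and> B \<bullet> va = 0 \<and> A \<bullet> va = 0))"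
      using ax unfolding is_axial_vector_def Let_def Drange
    proof (elim disjE conjE exE bexE)
      fix x0
      assume nd: "is_nondeg_parabola (range P)" and n1: "norm va = 1" and vN: "va \<in> NpM f q"
        and x0: "x0 \<in> range P"
        and sym: "(\<lambda>x. x0 + (2 * ((x - x0) \<bullet> va)) *\<^sub>R va - (x - x0)) ` range P = range P"
        and ch: "x0 + va \<in> convex hull range P"
      have vt: "va \<bullet> t = 0" using vN unfolding NpM by simp
      have vv: "va \<bullet> va = 1" using n1 by (simp add: norm_eq_1)
      have PD: "range P = range (\<lambda>s::real. A + s *\<^sub>R B + s\<^sup>2 *\<^sub>R C)" unfolding P_def ..
      have d: "(B \<bullet> va)*(C \<bullet> cross3 t va) - (C \<bullet> va)*(B \<bullet> cross3 t va) \<noteq> 0"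
        by (rule nondeg_d[OF PD nd ABCt(2) ABCt(3) t(1) vv vt])
      have ue: "va \<bullet> cross3 t va = 0" by (simp add: dot_cross_self)
      have "C \<bullet> va > 0" by (rule parab_axis[OF PD vv ue d x0 sym ch])
      then show ?thesis using vt n1 by auto
    next
      fix x0 w
      assume hl: "is_halfline_from (range P) x0 w" and vw: "va = w /\<^sub>R norm w"
      have hl': "w \<noteq> 0 \<and> range P = {x0 + t *\<^sub>R w | t. t \<ge> 0}" using hl unfolding is_halfline_from_def .
      have w0: "w \<noteq> 0" using hl' by (rule conjunct1)
      have H: "range P = {x0 + t *\<^sub>R w | t. t \<ge> 0}" using hl' by (rule conjunct2)
      have PD: "range P = range (\<lambda>s::real. A + s *\<^sub>R B + s\<^sup>2 *\<^sub>R C)" unfolding P_def ..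
      have Cw: "C \<bullet> w > 0" by (rule halfline_param[OF PD H w0])
      have "x0 + 0 *\<^sub>R w \<in> {x0 + t *\<^sub>R w | t. t \<ge> 0}" by (rule CollectI, rule exI[of _ "0::real"]) simp
      moreover have "x0 + 1 *\<^sub>R w \<in> {x0 + t *\<^sub>R w | t. t \<ge> 0}" by (rule CollectI, rule exI[of _ "1::real"]) simp
      ultimately have "x0 + 0 *\<^sub>R w \<in> range P" "x0 + 1 *\<^sub>R w \<in> range P" unfolding H by blast+
      then have "x0 \<bullet> t = 0" "(x0 + w) \<bullet> t = 0" using Pt by auto
      then have wt: "w \<bullet> t = 0" by (simp add: inner_add_left)
      have "C \<bullet> va = (C \<bullet> w) / norm w" unfolding vw by (simp add: divide_inverse mult.commute)
      moreover have "norm w > 0" using w0 by simp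
      ultimately have "C \<bullet> va > 0" using Cw by simp
      moreover have "va \<bullet> t = 0" unfolding vw using wt by simp
      moreover have "va \<noteq> 0" unfolding vw using w0 by simp
      ultimately show ?thesis by auto
    next
      fix c0
      assume D: "range P = {c0}" and n1: "norm va = 1" and vN: "va \<in> NpM f q" and vc: "va \<bullet> c0 = 0"
      have PD: "range (\<lambda>s::real. A + s *\<^sub>R B + s\<^sup>2 *\<^sub>R C) = {c0}" using D unfolding P_def .
      note pp = point_param[OF PD]
      have "va \<bullet> t = 0" using vN unfolding NpM by simp
      moreover have "va \<noteq> 0" using n1 by auto
      ultimately show ?thesis using pp vc by (auto simp: inner_commute)
    next
      assume D: "range P = {0}" and n1: "norm va = 1" and vN: "va \<in> NpM f q"
      have PD: "range (\<lambda>s::real. A + s *\<^sub>R B + s\<^sup>2 *\<^sub>R C) = {0}" using D unfolding P_def .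
      note pp = point_param[OF PD]
      have "va \<bullet> t = 0" using vN unfolding NpM by simp
      moreover have "va \<noteq> 0" using n1 by auto
      ultimately show ?thesis using pp by auto
    qed
    then show "va \<bullet> t = 0" "va \<noteq> 0" "C \<bullet> va > 0 \<or> (C \<bullet> va = 0 \<and> B \<bullet> va = 0 \<and> A \<bullet> va = 0)" by auto
  qed
  define p where "p = A \<bullet> va"
  define r where "r = (B \<bullet> va) / 2"
  define m where "m = C \<bullet> va"
  define a' where "a' = a \<bullet> va"
  define b' where "b' = b \<bullet> va"
  define c' where "c' = c \<bullet> va"
  have phi: "P s \<bullet> va = p + 2*r* s + m* s\<^sup>2" for s
    unfolding P_def p_def r_def m_def by (simp add: inner_add_left)
  have kap: "axial_curvature f q va = Inf (range (\<lambda>s. p + 2*r* s + m* s\<^sup>2))"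
    unfolding axial_curvature_def Drange image_image phi ..
  have FF2va: "FF2 f q X Y \<bullet> va = X$1*Y$1*a' + (X$1*Y$2 + X$2*Y$1)*b' + X$2*Y$2*c'" for X Y
    unfolding FF2 a'_def b'_def c'_def by (simp add: inner_add_left)
  have bin: "is_binormal f q va \<longleftrightarrow> a'*c' = b'^2"
  proof -
    have "is_binormal f q va \<longleftrightarrow> (\<exists>X::real^2. X \<noteq> 0 \<and> (\<forall>Y::real^2. X$1*Y$1*a' + (X$1*Y$2 + X$2*Y$1)*b' + X$2*Y$2*c' = 0))"
      unfolding is_binormal_def FF2va NpM using vaN va0 by simp
    then show ?thesis using degen by simp
  qed
  have pA: "p = u1^2*a' + 2*u1*u2*b' + u2^2*c'" unfolding p_def A_def a'_def b'_def c'_def by (simp add: inner_add_left)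
  have rB: "r = -u1*\<beta>*a' + (u1*\<alpha> - u2*\<beta>)*b' + u2*\<alpha>*c'" unfolding r_def B_def a'_def b'_def c'_def by (simp add: inner_add_left inner_diff_left field_simps)
  have mC: "m = \<beta>^2*a' - 2*\<alpha>*\<beta>*b' + \<alpha>^2*c'" unfolding m_def C_def a'_def b'_def c'_def by (simp add: inner_add_left inner_diff_left algebra_simps)
  have ident: "p*m - r^2 = (a'*c' - b'^2) * (u1*\<alpha> + u2*\<beta>)^2"
    unfolding pA rB mC power2_eq_square by algebra
  then have ident1: "p*m - r^2 = a'*c' - b'^2" using u12 by simp
  show ?thesis
  proof (cases "m > 0")
    case True
    have "Inf (range (\<lambda>s. p + 2*r* s + m* s\<^sup>2)) = p - r^2/m"
    proof (rule cInf_eq_minimum)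
      have e: "p - r^2/m = p + 2*r*(-r/m) + m*(-r/m)\<^sup>2" using True by (simp add: field_simps power2_eq_square)
      show "p - r^2/m \<in> range (\<lambda>s. p + 2*r* s + m* s\<^sup>2)" by (rule range_eqI[where x="-r/m"]) (use e in simp)
    next
      fix x assume "x \<in> range (\<lambda>s. p + 2*r* s + m* s\<^sup>2)"
      then obtain s where s: "x = p + 2*r* s + m* s\<^sup>2" by auto
      have "p + 2*r* s + m* s\<^sup>2 - (p - r^2/m) = m * (s + r/m)^2" using True by (simp add: field_simps power2_eq_square)
      moreover have "m * (s + r/m)^2 \<ge> 0" using True by simp
      ultimately show "p - r^2/m \<le> x" unfolding s by linarith
    qed
    then have "axial_curvature f q va = 0 \<longleftrightarrow> p - r^2/m = 0" unfolding kap by simp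
    also have "\<dots> \<longleftrightarrow> p*m - r^2 = 0" using True by (simp add: field_simps)
    also have "\<dots> \<longleftrightarrow> is_binormal f q va" unfolding ident1 bin by simp
    finally show ?thesis .
  next
    case False
    then have z: "m = 0" "r = 0" "p = 0" using cases unfolding m_def r_def p_def by auto
    have "range (\<lambda>s. p + 2*r* s + m* s\<^sup>2) = {0}" using z by auto
    then have "axial_curvature f q va = 0" unfolding kap by simp
    moreover have "is_binormal f q va" unfolding bin using ident1 z by simp
    ultimately show ?thesis by simp
  qed
qed

end
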